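(* For each $d\ge 1$, the class of matroids that admit a $d$-th symmetric power is minor closed.
   Context: For a finite set $E$, $\mathrm{Sym}_d(E)$ is the set of multisets of size $d$ from $E$, written multiplicatively ($\alpha\beta$ is multiset union), $\mathrm{Sym}_0(E)=\{1\}$. For $\alpha\in\mathrm{Sym}_{d-i}(E)$ and a matroid $N$ on $\mathrm{Sym}_d(E)$, $N|_\alpha$ denotes the restriction of $N$ to $\{\alpha\beta:\beta\in\mathrm{Sym}_i(E)\}$. Given a matroid $M$ on $E$, a $d$-th symmetric quasi power of $M$ is a sequence $(M_1,\dots,M_d)$ of matroids with $M_1=M$, $M_i$ on ground set $\mathrm{Sym}_i(E)$, such that for all $1\le i\le d$ and $\alpha\in\mathrm{Sym}_{d-i}(E)$: if no element of $\alpha$ is a loop of $M$, then $\beta\mapsto\alpha\beta$ is an isomorphism $M_i\cong M_d|_\alpha$; otherwise $\mathrm{rk}(M_d|_\alpha)=0$. It is a $d$-th symmetric power of $M$ if moreover $\mathrm{rk}(M_d)=\binom{\mathrm{rk}(M)+d-1}{d}$. A matroid $M$ admits a $d$-th symmetric power if such a sequence exists. *)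

theory Defs
  imports Main "HOL-Library.Multiset"
begin

type_synonym 'a matroid = "'a set \<times> ('a set \<Rightarrow> bool)"

definition ground :: "'a matroid \<Rightarrow> 'a set" where "ground M = fst M"
definition indep :: "'a matroid \<Rightarrow> 'a set \<Rightarrow> bool" where "indep M = snd M"

definition matroid :: "'a matroid \<Rightarrow> bool" where
  "matroid M \<longleftrightarrow> finite (ground M) \<and> indep M {} \<and>
     (\<forall>X. indep M X \<longrightarrow> X \<subseteq> ground M) \<and>
     (\<forall>X Y. indep M Y \<and> X \<subseteq> Y \<longrightarrow> indep M X) \<and>
     (\<forall>X Y. indep M X \<and> indep M Y \<and> card X < card Y \<longrightarrow>
        (\<exists>e\<in>Y - X. indep M (insert e X)))"

definition mrank :: "'a matroid \<Rightarrow> 'a set \<Rightarrow> nat" where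
  "mrank M X = Max (card ` {Y. Y \<subseteq> X \<and> indep M Y})"

definition rk :: "'a matroid \<Rightarrow> nat" where "rk M = mrank M (ground M)"

definition loop :: "'a matroid \<Rightarrow> 'a \<Rightarrow> bool" where
  "loop M e \<longleftrightarrow> e \<in> ground M \<and> \<not> indep M {e}"

definition restrict :: "'a matroid \<Rightarrow> 'a set \<Rightarrow> 'a matroid" where
  "restrict M S = (S, \<lambda>X. X \<subseteq> S \<and> indep M X)"

definition delete :: "'a matroid \<Rightarrow> 'a set \<Rightarrow> 'a matroid" where
  "delete M D = restrict M (ground M - D)"

definition contract :: "'a matroid \<Rightarrow> 'a set \<Rightarrow> 'a matroid" where
  "contract M C = (ground M - C,
     \<lambda>X. X \<subseteq> ground M - C \<and> mrank M (X \<union> C) = card X + mrank M C)"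

definition minor :: "'a matroid \<Rightarrow> 'a matroid \<Rightarrow> bool" where
  "minor N M \<longleftrightarrow> (\<exists>C D. C \<subseteq> ground M \<and> D \<subseteq> ground M \<and> C \<inter> D = {} \<and>
      N = delete (contract M C) D)"

definition iso_via :: "('a \<Rightarrow> 'b) \<Rightarrow> 'a matroid \<Rightarrow> 'b matroid \<Rightarrow> bool" where
  "iso_via f M N \<longleftrightarrow> bij_betw f (ground M) (ground N) \<and>
     (\<forall>X. X \<subseteq> ground M \<longrightarrow> (indep M X \<longleftrightarrow> indep N (f ` X)))"

text \<open>Sym_d(E): multisets of size d with elements from E (product = multiset sum).\<close>
definition Sym :: "'a set \<Rightarrow> nat \<Rightarrow> 'a multiset set" where
  "Sym E d = {m. set_mset m \<subseteq> E \<and> size m = d}"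

definition restr_at :: "'a multiset matroid \<Rightarrow> 'a set \<Rightarrow> nat \<Rightarrow> 'a multiset \<Rightarrow> 'a multiset matroid" where
  "restr_at N E i \<alpha> = restrict N ((\<lambda>\<beta>. \<alpha> + \<beta>) ` Sym E i)"

definition sym_quasi_power :: "'a matroid \<Rightarrow> nat \<Rightarrow> (nat \<Rightarrow> 'a multiset matroid) \<Rightarrow> bool" where
  "sym_quasi_power M d Ms \<longleftrightarrow>
     (\<forall>i\<in>{1..d}. matroid (Ms i) \<and> ground (Ms i) = Sym (ground M) i) \<and>
     iso_via (\<lambda>e. {#e#}) M (Ms 1) \<and>
     (\<forall>i\<in>{1..d}. \<forall>\<alpha>\<in>Sym (ground M) (d - i).
        (if (\<forall>e\<in>#\<alpha>. \<not> loop M e)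
         then iso_via (\<lambda>\<beta>. \<alpha> + \<beta>) (Ms i) (restr_at (Ms d) (ground M) i \<alpha>)
         else rk (restr_at (Ms d) (ground M) i \<alpha>) = 0))"

definition sym_power :: "'a matroid \<Rightarrow> nat \<Rightarrow> (nat \<Rightarrow> 'a multiset matroid) \<Rightarrow> bool" where
  "sym_power M d Ms \<longleftrightarrow> sym_quasi_power M d Ms \<and>
     rk (Ms d) = (rk M + d - 1) choose d"

definition admits_sym_power :: "'a matroid \<Rightarrow> nat \<Rightarrow> bool" where
  "admits_sym_power M d \<longleftrightarrow> (\<exists>Ms. sym_power M d Ms)"

end

theory Submission
  imports Defs
begin


context fixes M :: "'a matroid" assumes M: "matroid M" begin

lemma fin_ground: "finite (ground M)" using M by (simp add: matroid_def)
lemma indep_empty: "indep M {}" using M by (simp add: matroid_def)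
lemma indep_sub: "indep M X \<Longrightarrow> X \<subseteq> ground M" using M by (simp add: matroid_def)
lemma indep_fin: "indep M X \<Longrightarrow> finite X" using indep_sub fin_ground finite_subset by blast
lemma indep_down: "indep M Y \<Longrightarrow> X \<subseteq> Y \<Longrightarrow> indep M X" using M unfolding matroid_def by blast
lemma indep_aug: "indep M X \<Longrightarrow> indep M Y \<Longrightarrow> card X < card Y \<Longrightarrow> \<exists>e\<in>Y-X. indep M (insert e X)"
  using M by (simp add: matroid_def)

lemma fin_cards: "finite (card ` {Y. Y \<subseteq> X \<and> indep M Y})"
proof -
  have "{Y. Y \<subseteq> X \<and> indep M Y} \<subseteq> Pow (ground M)" using indep_sub by auto
  then show ?thesis using fin_ground by (meson finite_Pow_iff finite_imageI finite_subset)
qed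

lemma mrank_ge: "Y \<subseteq> X \<Longrightarrow> indep M Y \<Longrightarrow> card Y \<le> mrank M X"
  unfolding mrank_def by (rule Max_ge[OF fin_cards]) auto

lemma mrank_ex: "\<exists>Y. Y \<subseteq> X \<and> indep M Y \<and> card Y = mrank M X"
proof -
  have "mrank M X \<in> card ` {Y. Y \<subseteq> X \<and> indep M Y}"
    unfolding mrank_def by (rule Max_in[OF fin_cards]) (use indep_empty in auto)
  then show ?thesis by auto
qed

lemma mrank_extend_aux:
  "\<forall>I. I \<subseteq> X \<longrightarrow> indep M I \<longrightarrow> mrank M X - card I = n \<longrightarrow>
     (\<exists>J. I \<subseteq> J \<and> J \<subseteq> X \<and> indep M J \<and> card J = mrank M X)"
proof (induction n)
  case 0
  show ?case
  proof (intro allI impI)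
    fix I assume I: "I \<subseteq> X" "indep M I" "mrank M X - card I = 0"
    have "card I \<le> mrank M X" using mrank_ge I by simp
    then have "card I = mrank M X" using I(3) by simp
    then show "\<exists>J. I \<subseteq> J \<and> J \<subseteq> X \<and> indep M J \<and> card J = mrank M X" using I by blast
  qed
next
  case (Suc n)
  show ?case
  proof (intro allI impI)
    fix I assume I: "I \<subseteq> X" "indep M I" "mrank M X - card I = Suc n"
    obtain Y where Y: "Y \<subseteq> X" "indep M Y" "card Y = mrank M X" using mrank_ex by blast
    have lt: "card I < card Y" using I(3) Y(3) by simp
    obtain e where e: "e \<in> Y - I" "indep M (insert e I)"
      using indep_aug[OF I(2) Y(2) lt] by blast
    have fin: "finite I" using indep_fin I(2) by simp
    have c: "card (insert e I) = Suc (card I)" using e(1) fin by simp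
    have s: "insert e I \<subseteq> X" using e(1) Y(1) I(1) by blast
    have "mrank M X - card (insert e I) = n" using c I(3) by simp
    then obtain J where J: "insert e I \<subseteq> J" "J \<subseteq> X" "indep M J" "card J = mrank M X"
      using Suc.IH s e(2) by blast
    then show "\<exists>J. I \<subseteq> J \<and> J \<subseteq> X \<and> indep M J \<and> card J = mrank M X" by blast
  qed
qed

lemma mrank_extend:
  assumes "I \<subseteq> X" "indep M I"
  shows "\<exists>J. I \<subseteq> J \<and> J \<subseteq> X \<and> indep M J \<and> card J = mrank M X"
  using mrank_extend_aux assms by blast

lemma mrank_le_card: "finite X \<Longrightarrow> mrank M X \<le> card X"
proof -
  assume f: "finite X"
  obtain Y where "Y \<subseteq> X" "indep M Y" "card Y = mrank M X" using mrank_ex by blast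
  then show ?thesis using card_mono[OF f, of Y] by simp
qed

lemma mrank_mono: "X \<subseteq> Y \<Longrightarrow> mrank M X \<le> mrank M Y"
proof -
  assume s: "X \<subseteq> Y"
  obtain Z where "Z \<subseteq> X" "indep M Z" "card Z = mrank M X" using mrank_ex by blast
  then show ?thesis using mrank_ge[of Z Y] s by simp
qed

lemma indep_mrank: "indep M X \<Longrightarrow> mrank M X = card X"
proof -
  assume i: "indep M X"
  have "card X \<le> mrank M X" using mrank_ge[of X X] i by simp
  moreover have "mrank M X \<le> card X" using mrank_le_card indep_fin[OF i] by simp
  ultimately show ?thesis by simp
qed

lemma mrank_indep: "finite X \<Longrightarrow> mrank M X = card X \<Longrightarrow> indep M X"
proof -
  assume f: "finite X" and c: "mrank M X = card X"
  obtain Z where Z: "Z \<subseteq> X" "indep M Z" "card Z = mrank M X" using mrank_ex by blast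
  then have "Z = X" using card_subset_eq[OF f] c by simp
  then show ?thesis using Z by simp
qed

lemma mrank_empty: "mrank M {} = 0"
  using mrank_le_card[of "{}"] by simp

lemma submod: "mrank M (A \<union> B) + mrank M (A \<inter> B) \<le> mrank M A + mrank M B"
proof -
  obtain I where I: "I \<subseteq> A \<inter> B" "indep M I" "card I = mrank M (A \<inter> B)" using mrank_ex by blast
  obtain IA where IA: "I \<subseteq> IA" "IA \<subseteq> A" "indep M IA" "card IA = mrank M A"
    using mrank_extend[of I A] I by auto
  obtain J where J: "IA \<subseteq> J" "J \<subseteq> A \<union> B" "indep M J" "card J = mrank M (A \<union> B)"
    using mrank_extend[of IA "A \<union> B"] IA by auto
  have fJ: "finite J" using J indep_fin by auto
  have "J \<inter> A = IA"
  proof -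
    have "card (J \<inter> A) \<le> card IA" using mrank_ge[of "J \<inter> A" A] indep_down[OF J(3)] IA by auto
    moreover have "IA \<subseteq> J \<inter> A" using IA J by auto
    ultimately show ?thesis using card_seteq[of "J \<inter> A" IA] fJ by auto
  qed
  have cJ: "card J = card (J \<inter> A) + card (J - A)"
    using fJ by (metis Int_Diff_disjoint Int_Diff_Un card_Un_disjoint finite_Diff finite_Int)
  have sub: "(J - A) \<union> I \<subseteq> J \<inter> B" using J I IA by auto
  have "card ((J - A) \<union> I) = card (J - A) + card I"
    using I fJ indep_fin[OF I(2)] by (intro card_Un_disjoint) auto
  moreover have "card ((J - A) \<union> I) \<le> mrank M B"
    using mrank_ge[of "(J - A) \<union> I" B] indep_down[OF J(3)] sub by auto
  moreover have "card J = mrank M A + card (J - A)" using cJ \<open>J \<inter> A = IA\<close> IA(4) by simp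
  ultimately show ?thesis using I(3) J(4) by linarith
qed

lemma subadd: "mrank M (A \<union> B) \<le> mrank M A + mrank M B"
  using submod[of A B] by linarith

lemma mrank_single: "mrank M {x} \<le> 1"
  using mrank_le_card[of "{x}"] by simp

lemma mrank_insert_le: "mrank M (insert x A) \<le> mrank M A + 1"
  using subadd[of "{x}" A] mrank_single[of x] by simp

lemma span_mono:
  assumes "A \<subseteq> A'" "mrank M (insert x A) = mrank M A"
  shows "mrank M (insert x A') = mrank M A'"
proof -
  have "mrank M (insert x A \<union> A') + mrank M (insert x A \<inter> A') \<le> mrank M (insert x A) + mrank M A'"
    by (rule submod)
  moreover have "insert x A \<union> A' = insert x A'" using assms by auto
  moreover have "mrank M A \<le> mrank M (insert x A \<inter> A')" using assms by (intro mrank_mono) auto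
  ultimately have "mrank M (insert x A') + mrank M (insert x A \<inter> A') \<le> mrank M A + mrank M A'"
    using assms(2) by simp
  then have "mrank M (insert x A') \<le> mrank M A'"
    using \<open>mrank M A \<le> mrank M (insert x A \<inter> A')\<close> by linarith
  moreover have "mrank M A' \<le> mrank M (insert x A')" by (rule mrank_mono) auto
  ultimately show ?thesis by simp
qed

lemma span_union:
  assumes "finite X" "\<forall>x\<in>X. mrank M (insert x A) = mrank M A"
  shows "mrank M (A \<union> X) = mrank M A"
  using assms
proof (induction X rule: finite_induct)
  case empty then show ?case by simp
next
  case (insert x F)
  then have h: "mrank M (A \<union> F) = mrank M A" by auto
  have "mrank M (insert x (A \<union> F)) = mrank M (A \<union> F)"
    using span_mono[of A "A \<union> F" x] insert.prems by auto
  then show ?case using h by simp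
qed

lemma span_set:
  assumes "finite X" "A \<subseteq> S" "X \<subseteq> S" "\<forall>x\<in>X. mrank M (insert x A) = mrank M A" "S \<subseteq> A \<union> X"
  shows "mrank M S = mrank M A"
proof -
  have "S = A \<union> X" using assms(2,3,5) by auto
  then show ?thesis using span_union[OF assms(1,4)] by simp
qed

lemma loop_span:
  assumes "mrank M {x} = 0"
  shows "mrank M (insert x A) = mrank M A"
proof -
  have "mrank M A \<le> mrank M (insert x A)" by (rule mrank_mono) auto
  then show ?thesis using subadd[of "{x}" A] assms by auto
qed

end



lemma ground_restrict[simp]: "ground (restrict M S) = S" by (simp add: restrict_def ground_def)
lemma indep_restrict[simp]: "indep (restrict M S) X \<longleftrightarrow> X \<subseteq> S \<and> indep M X"
  by (simp add: restrict_def indep_def)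
lemma ground_contract[simp]: "ground (contract M T) = ground M - T" by (simp add: contract_def ground_def)
lemma indep_contract[simp]: "indep (contract M T) X \<longleftrightarrow> X \<subseteq> ground M - T \<and> mrank M (X \<union> T) = card X + mrank M T"
  by (simp add: contract_def indep_def)

lemma restrict_matroid: assumes M: "matroid M" and S: "S \<subseteq> ground M" shows "matroid (restrict M S)"
proof -
  have aug: "\<exists>e\<in>Y-X. indep (restrict M S) (insert e X)"
    if h: "indep (restrict M S) X" "indep (restrict M S) Y" "card X < card Y" for X Y
  proof -
    obtain e where "e \<in> Y - X" "indep M (insert e X)" using indep_aug[OF M, of X Y] h by auto
    then show ?thesis using h by auto
  qed
  have "finite S" using fin_ground[OF M] S finite_subset by auto
  then show ?thesis unfolding matroid_def using aug indep_empty[OF M] indep_down[OF M] by auto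
qed

lemma mrank_restrict: "mrank (restrict M S) X = mrank M (X \<inter> S)"
proof -
  have "{Y. Y \<subseteq> X \<and> indep (restrict M S) Y} = {Y. Y \<subseteq> X \<inter> S \<and> indep M Y}" by auto
  then show ?thesis unfolding mrank_def by simp
qed

lemma restrict_restrict: "B \<subseteq> A \<Longrightarrow> restrict (restrict M A) B = restrict M B"
  by (auto simp: restrict_def indep_def fun_eq_iff)

lemma restrict_self: assumes "matroid M" shows "restrict M (ground M) = M"
proof -
  have "\<And>X. (X \<subseteq> ground M \<and> indep M X) = indep M X" using indep_sub[OF assms] by auto
  then show ?thesis unfolding restrict_def by (simp add: ground_def indep_def prod_eq_iff fun_eq_iff)
qed

lemma contract_matroid: assumes M: "matroid M" shows "matroid (contract M T)"
proof -
  let ?r = "mrank M"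
  have fin: "finite (ground M - T)" using fin_ground[OF M] by auto
  have emp: "indep (contract M T) {}" by simp
  have sub: "\<forall>X. indep (contract M T) X \<longrightarrow> X \<subseteq> ground (contract M T)" by simp
  have down: "indep (contract M T) X" if Y: "indep (contract M T) Y" "X \<subseteq> Y" for X Y
  proof -
    have fY: "finite Y" using Y fin finite_subset by auto
    have eq: "Y \<union> T = (X \<union> T) \<union> (Y - X)" using Y by auto
    have "?r (Y \<union> T) \<le> ?r (X \<union> T) + ?r (Y - X)" unfolding eq by (rule subadd[OF M])
    also have "?r (Y - X) \<le> card (Y - X)" using mrank_le_card[OF M] fY by auto
    finally have a: "card Y + ?r T \<le> ?r (X \<union> T) + card (Y - X)" using Y by auto
    have "card Y = card X + card (Y - X)" using fY Y(2)
      by (metis card_Diff_subset finite_subset add_diff_inverse_nat card_mono not_le diff_le_self le_antisym)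
    then have ge: "card X + ?r T \<le> ?r (X \<union> T)" using a by linarith
    have "?r (X \<union> T) \<le> ?r X + ?r T" by (rule subadd[OF M])
    also have "?r X \<le> card X" using mrank_le_card[OF M] fY Y(2) finite_subset by auto
    finally have "?r (X \<union> T) \<le> card X + ?r T" by simp
    then show ?thesis using ge Y by auto
  qed
  have aug: "\<exists>e\<in>Y-X. indep (contract M T) (insert e X)"
    if X: "indep (contract M T) X" and Y: "indep (contract M T) Y" and c: "card X < card Y" for X Y
  proof (rule ccontr)
    assume no: "\<not> ?thesis"
    have fY: "finite Y" using Y fin finite_subset by auto
    have fX: "finite X" using X fin finite_subset by auto
    have sp: "\<forall>e\<in>Y - X. ?r (insert e (X \<union> T)) = ?r (X \<union> T)"
    proof
      fix e assume e: "e \<in> Y - X"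
      have "insert e X \<subseteq> ground M - T" using X Y e by auto
      moreover have cI: "card (insert e X) = card X + 1" using e fX by auto
      ultimately have ne: "?r (insert e X \<union> T) \<noteq> card X + 1 + ?r T" using no e by auto
      have "?r (insert e (X \<union> T)) \<le> ?r (X \<union> T) + 1" by (rule mrank_insert_le[OF M])
      moreover have "?r (X \<union> T) \<le> ?r (insert e (X \<union> T))" by (rule mrank_mono[OF M]) auto
      ultimately show "?r (insert e (X \<union> T)) = ?r (X \<union> T)" using ne X by auto
    qed
    have "?r ((X \<union> T) \<union> (Y - X)) = ?r (X \<union> T)"
      by (rule span_union[OF M]) (use fY sp in auto)
    moreover have "?r (Y \<union> T) \<le> ?r ((X \<union> T) \<union> (Y - X))" by (rule mrank_mono[OF M]) auto
    ultimately show False using X Y c by auto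
  qed
  show ?thesis unfolding matroid_def using fin emp sub down aug by (simp only: ground_contract) blast
qed

lemma iso_bij: "iso_via f A B \<Longrightarrow> bij_betw f (ground A) (ground B)" by (simp add: iso_via_def)
lemma iso_indep: "iso_via f A B \<Longrightarrow> X \<subseteq> ground A \<Longrightarrow> indep A X \<longleftrightarrow> indep B (f ` X)"
  by (simp add: iso_via_def)

lemma iso_mrank:
  assumes iso: "iso_via f A B" and X: "X \<subseteq> ground A"
  shows "mrank B (f ` X) = mrank A X"
proof -
  have inj: "inj_on f (ground A)" using iso_bij[OF iso] bij_betw_def by auto
  have eq: "{Y'. Y' \<subseteq> f ` X \<and> indep B Y'} = (`) f ` {Y. Y \<subseteq> X \<and> indep A Y}"
  proof (intro equalityI subsetI)
    fix Y' assume "Y' \<in> {Y'. Y' \<subseteq> f ` X \<and> indep B Y'}"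
    then have Y': "Y' \<subseteq> f ` X" "indep B Y'" by auto
    define Y where "Y = X \<inter> f -` Y'"
    have "f ` Y = Y'" using Y' unfolding Y_def by auto
    moreover have "indep A Y" using iso_indep[OF iso, of Y] X Y' \<open>f ` Y = Y'\<close> unfolding Y_def by auto
    ultimately show "Y' \<in> (`) f ` {Y. Y \<subseteq> X \<and> indep A Y}" unfolding Y_def by auto
  next
    fix Y' assume "Y' \<in> (`) f ` {Y. Y \<subseteq> X \<and> indep A Y}"
    then obtain Y where "Y' = f ` Y" "Y \<subseteq> X" "indep A Y" by auto
    then show "Y' \<in> {Y'. Y' \<subseteq> f ` X \<and> indep B Y'}" using iso_indep[OF iso, of Y] X by auto
  qed
  have "card ` {Y'. Y' \<subseteq> f ` X \<and> indep B Y'} = card ` {Y. Y \<subseteq> X \<and> indep A Y}"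
    unfolding eq image_image
    by (intro image_cong refl card_image) (use inj X in \<open>auto intro: inj_on_subset\<close>)
  then show ?thesis unfolding mrank_def by simp
qed

lemma iso_restrict:
  assumes iso: "iso_via f A B" and S: "S \<subseteq> ground A"
  shows "iso_via f (restrict A S) (restrict B (f ` S))"
proof -
  have "bij_betw f S (f ` S)" using iso_bij[OF iso] S bij_betw_subset by blast
  moreover have "indep A X \<longleftrightarrow> X \<subseteq> S \<and> indep B (f ` X)" if "X \<subseteq> S" for X
    using iso_indep[OF iso, of X] that S by auto
  moreover have "f ` X \<subseteq> f ` S" if "X \<subseteq> S" for X using that by auto
  ultimately show ?thesis unfolding iso_via_def by auto
qed

lemma iso_contract:
  assumes iso: "iso_via f A B" and T: "T \<subseteq> ground A"
  shows "iso_via f (contract A T) (contract B (f ` T))"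
proof -
  have bij: "bij_betw f (ground A) (ground B)" using iso_bij[OF iso] .
  then have inj: "inj_on f (ground A)" by (simp add: bij_betw_def)
  have b1: "bij_betw f (ground A - T) (ground B - f ` T)"
    using bij T by (metis bij_betw_subset bij_betw_def Diff_subset inj_on_image_set_diff)
  have "indep (contract A T) X \<longleftrightarrow> indep (contract B (f ` T)) (f ` X)" if X: "X \<subseteq> ground A - T" for X
  proof -
    have "f ` X \<subseteq> ground B - f ` T" using b1 X by (auto simp: bij_betw_def)
    moreover have "mrank B (f ` X \<union> f ` T) = mrank A (X \<union> T)"
    proof -
      have "X \<union> T \<subseteq> ground A" using X T by auto
      then show ?thesis using iso_mrank[OF iso, of "X \<union> T"] by (simp add: image_Un)
    qed
    moreover have "mrank B (f ` T) = mrank A T" using iso_mrank[OF iso T] .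
    moreover have "card (f ` X) = card X" using inj X by (meson Diff_subset card_image inj_on_subset subset_trans)
    ultimately show ?thesis using X by simp
  qed
  then show ?thesis unfolding iso_via_def using b1 by simp
qed




lemma Sym_eq: "Sym E d = multisets_of_size E d" by (simp add: Sym_def multisets_of_size_def)
lemma finite_Sym: "finite E \<Longrightarrow> finite (Sym E d)"
  unfolding Sym_eq by (rule finite_multisets_of_size)
lemma card_Sym: "finite E \<Longrightarrow> card (Sym E d) = (card E + d - 1) choose d"
  unfolding Sym_eq by (rule card_multisets_of_size)
lemma Sym_mono: "A \<subseteq> B \<Longrightarrow> Sym A d \<subseteq> Sym B d" by (auto simp: Sym_def)
lemma Sym_iff: "m \<in> Sym E d \<longleftrightarrow> set_mset m \<subseteq> E \<and> size m = d" by (simp add: Sym_def)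
lemma Sym_0[simp]: "Sym E 0 = {{#}}" by (auto simp: Sym_def)

lemma sqp_matroid: "sym_quasi_power M d Ms \<Longrightarrow> i \<in> {1..d} \<Longrightarrow> matroid (Ms i)"
  by (simp add: sym_quasi_power_def)
lemma sqp_ground: "sym_quasi_power M d Ms \<Longrightarrow> i \<in> {1..d} \<Longrightarrow> ground (Ms i) = Sym (ground M) i"
  by (simp add: sym_quasi_power_def)
lemma sqp_one: "sym_quasi_power M d Ms \<Longrightarrow> iso_via (\<lambda>e. {#e#}) M (Ms 1)"
  by (simp add: sym_quasi_power_def)
lemma sqp_free: "sym_quasi_power M d Ms \<Longrightarrow> i \<in> {1..d} \<Longrightarrow> \<alpha> \<in> Sym (ground M) (d - i) \<Longrightarrow>
   \<forall>e\<in>#\<alpha>. \<not> loop M e \<Longrightarrow> iso_via (\<lambda>\<beta>. \<alpha> + \<beta>) (Ms i) (restr_at (Ms d) (ground M) i \<alpha>)"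
  unfolding sym_quasi_power_def by auto
lemma sqp_loop: "sym_quasi_power M d Ms \<Longrightarrow> i \<in> {1..d} \<Longrightarrow> \<alpha> \<in> Sym (ground M) (d - i) \<Longrightarrow>
   \<not> (\<forall>e\<in>#\<alpha>. \<not> loop M e) \<Longrightarrow> rk (restr_at (Ms d) (ground M) i \<alpha>) = 0"
  unfolding sym_quasi_power_def by auto

lemma Sym_1: "Sym E 1 = (\<lambda>e. {#e#}) ` E"
proof (intro equalityI subsetI)
  fix x assume "x \<in> Sym E 1"
  then have x: "set_mset x \<subseteq> E" "size x = 1" by (auto simp: Sym_def)
  then obtain a where "x = {#a#}" using size_1_singleton_mset by blast
  then show "x \<in> (\<lambda>e. {#e#}) ` E" using x by auto
qed (auto simp: Sym_def)

lemma Sym_Suc0: "Sym E (Suc 0) = (\<lambda>e. {#e#}) ` E" using Sym_1 by simp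

lemma rk_restr_at: "rk (restr_at N E i \<alpha>) = mrank N ((\<lambda>\<beta>. \<alpha> + \<beta>) ` Sym E i)"
  by (simp add: rk_def restr_at_def mrank_restrict)

lemma step:
  assumes Q: "sym_quasi_power M d Ms" and d: "1 \<le> d" and M: "matroid M"
    and \<alpha>: "\<alpha> \<in> Sym (ground M) (d - 1)" and x: "x \<in> ground M" and A: "A \<subseteq> ground M"
    and sp: "mrank M (insert x A) = mrank M A"
  shows "mrank (Ms d) (insert (\<alpha> + {#x#}) ((\<lambda>b. \<alpha> + {#b#}) ` A)) = mrank (Ms d) ((\<lambda>b. \<alpha> + {#b#}) ` A)"
proof (cases "\<forall>e\<in>#\<alpha>. \<not> loop M e")
  case True
  have iso1: "iso_via (\<lambda>e. {#e#}) M (Ms 1)" by (rule sqp_one[OF Q])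
  have iso2: "iso_via (\<lambda>\<beta>. \<alpha> + \<beta>) (Ms 1) (restr_at (Ms d) (ground M) 1 \<alpha>)"
    by (rule sqp_free[OF Q _ \<alpha> True]) (use d in auto)
  have g1: "ground (Ms 1) = Sym (ground M) 1" by (rule sqp_ground[OF Q]) (use d in auto)
  have key: "mrank (Ms d) ((\<lambda>b. \<alpha> + {#b#}) ` Z) = mrank M Z" if Z: "Z \<subseteq> ground M" for Z
  proof -
    have "mrank M Z = mrank (Ms 1) ((\<lambda>e. {#e#}) ` Z)" using iso_mrank[OF iso1 Z] by simp
    also have "\<dots> = mrank (restr_at (Ms d) (ground M) 1 \<alpha>) ((\<lambda>\<beta>. \<alpha> + \<beta>) ` ((\<lambda>e. {#e#}) ` Z))"
    proof -
      have "(\<lambda>e. {#e#}) ` Z \<subseteq> ground (Ms 1)" using g1 Z by (auto simp: Sym_def)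
      from iso_mrank[OF iso2 this] show ?thesis by simp
    qed
    also have "\<dots> = mrank (Ms d) ((\<lambda>b. \<alpha> + {#b#}) ` Z)"
      unfolding restr_at_def mrank_restrict image_image
      by (rule arg_cong[where f="mrank (Ms d)"]) (use Z in \<open>auto simp: Sym_1 Sym_Suc0\<close>)
    finally show ?thesis by simp
  qed
  show ?thesis using key[of "insert x A"] key[of A] x A sp by simp
next
  case False
  have "rk (restr_at (Ms d) (ground M) 1 \<alpha>) = 0" by (rule sqp_loop[OF Q _ \<alpha> False]) (use d in auto)
  then have z: "mrank (Ms d) ((\<lambda>\<beta>. \<alpha> + \<beta>) ` Sym (ground M) 1) = 0" by (simp add: rk_restr_at)
  have Md: "matroid (Ms d)" by (rule sqp_matroid[OF Q]) (use d in auto)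
  have "mrank (Ms d) {\<alpha> + {#x#}} \<le> mrank (Ms d) ((\<lambda>\<beta>. \<alpha> + \<beta>) ` Sym (ground M) 1)"
    by (rule mrank_mono[OF Md]) (use x in \<open>auto simp: Sym_1 Sym_Suc0\<close>)
  then show ?thesis using loop_span[OF Md] z by auto
qed

definition Cl :: "'a multiset set \<Rightarrow> 'a set \<Rightarrow> ('a \<Rightarrow> 'a set) \<Rightarrow> bool" where
  "Cl S good R \<longleftrightarrow> (\<forall>m\<in>S. (\<exists>x\<in>#m. x \<notin> good) \<longrightarrow>
      (\<exists>x\<in>#m. x \<notin> good \<and> (\<forall>b\<in>R x. m - {#x#} + {#b#} \<in> S)))"

lemma replace_pt:
  assumes Q: "sym_quasi_power M d Ms" and d: "1 \<le> d" and M: "matroid M"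
    and S: "S \<subseteq> Sym (ground M) d" and good: "good \<subseteq> ground M"
    and R: "\<And>x m. m \<in> S \<Longrightarrow> x \<in># m \<Longrightarrow> x \<notin> good \<Longrightarrow> R x \<subseteq> good \<and> mrank M (insert x (R x)) = mrank M (R x)"
    and cl: "Cl S good R"
  shows "m \<in> S \<Longrightarrow> mrank (Ms d) (insert m (S \<inter> Sym good d)) = mrank (Ms d) (S \<inter> Sym good d)"
proof (induction "size (filter_mset (\<lambda>x. x \<notin> good) m)" arbitrary: m rule: less_induct)
  case less
  let ?S0 = "S \<inter> Sym good d"
  have Md: "matroid (Ms d)" by (rule sqp_matroid[OF Q]) (use d in auto)
  have mS: "m \<in> Sym (ground M) d" using less.prems S by auto
  show ?case
  proof (cases "\<exists>x\<in>#m. x \<notin> good")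
    case False
    then have "m \<in> ?S0" using less.prems S by (auto simp: Sym_def)
    then show ?thesis by (simp add: insert_absorb)
  next
    case True
    then obtain x where x: "x \<in># m" "x \<notin> good" and rep: "\<forall>b\<in>R x. m - {#x#} + {#b#} \<in> S"
      using cl less.prems unfolding Cl_def by blast
    define \<alpha> where "\<alpha> = m - {#x#}"
    have m_eq: "m = \<alpha> + {#x#}" using x unfolding \<alpha>_def by simp
    have xE: "x \<in> ground M" using mS x by (auto simp: Sym_def)
    have Rx: "R x \<subseteq> good" "mrank M (insert x (R x)) = mrank M (R x)" using R[of m x] less.prems x by auto
    have \<alpha>S: "\<alpha> \<in> Sym (ground M) (d - 1)" using mS m_eq by (auto simp: Sym_def)
    let ?A = "(\<lambda>b. \<alpha> + {#b#}) ` R x"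
    have IHs: "\<forall>y\<in>?A. mrank (Ms d) (insert y ?S0) = mrank (Ms d) ?S0"
    proof
      fix y assume "y \<in> ?A"
      then obtain b where b: "b \<in> R x" "y = \<alpha> + {#b#}" by auto
      have yS: "y \<in> S" using rep b unfolding \<alpha>_def by simp
      have "size (filter_mset (\<lambda>x. x \<notin> good) y) < size (filter_mset (\<lambda>x. x \<notin> good) m)"
        using b Rx x unfolding m_eq by auto
      then show "mrank (Ms d) (insert y ?S0) = mrank (Ms d) ?S0" using less.hyps yS by blast
    qed
    have fA: "finite ?A" using finite_subset[OF _ fin_ground[OF M]] Rx good by (meson finite_imageI order_trans)
    have u: "mrank (Ms d) (?S0 \<union> ?A) = mrank (Ms d) ?S0" by (rule span_union[OF Md fA IHs])
    have st: "mrank (Ms d) (insert m ?A) = mrank (Ms d) ?A"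
      unfolding m_eq by (rule step[OF Q d M \<alpha>S xE _ Rx(2)]) (use Rx good in auto)
    have "mrank (Ms d) (insert m (?S0 \<union> ?A)) = mrank (Ms d) (?S0 \<union> ?A)"
      by (rule span_mono[OF Md _ st]) auto
    moreover have "mrank (Ms d) (insert m ?S0) \<le> mrank (Ms d) (insert m (?S0 \<union> ?A))"
      by (rule mrank_mono[OF Md]) auto
    moreover have "mrank (Ms d) ?S0 \<le> mrank (Ms d) (insert m ?S0)" by (rule mrank_mono[OF Md]) auto
    ultimately show ?thesis using u by linarith
  qed
qed

lemma replace:
  assumes Q: "sym_quasi_power M d Ms" and d: "1 \<le> d" and M: "matroid M"
    and S: "S \<subseteq> Sym (ground M) d" and good: "good \<subseteq> ground M"
    and R: "\<And>x m. m \<in> S \<Longrightarrow> x \<in># m \<Longrightarrow> x \<notin> good \<Longrightarrow> R x \<subseteq> good \<and> mrank M (insert x (R x)) = mrank M (R x)"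
    and cl: "Cl S good R"
  shows "mrank (Ms d) S = mrank (Ms d) (S \<inter> Sym good d)"
proof -
  have Md: "matroid (Ms d)" by (rule sqp_matroid[OF Q]) (use d in auto)
  have fS: "finite S" using S finite_Sym[OF fin_ground[OF M]] finite_subset by blast
  show ?thesis
    by (rule span_set[OF Md fS]) (use replace_pt[OF Q d M S good R cl] in auto)
qed




definition sbasis :: "'a matroid \<Rightarrow> 'a set \<Rightarrow> 'a set \<Rightarrow> bool" where
  "sbasis M X B \<longleftrightarrow> B \<subseteq> X \<and> indep M B \<and> card B = mrank M X"

lemma sbasis_ex: "matroid M \<Longrightarrow> \<exists>B. sbasis M X B"
  unfolding sbasis_def by (rule mrank_ex)

lemma sbasis_extend: assumes M: "matroid M" and I: "sbasis M X I" and XY: "X \<subseteq> Y"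
  shows "\<exists>B. sbasis M Y B \<and> I \<subseteq> B"
proof -
  have "I \<subseteq> Y" "indep M I" using I XY by (auto simp: sbasis_def)
  from mrank_extend[OF M this] show ?thesis unfolding sbasis_def by blast
qed

lemma sbasis_span: assumes "matroid M" "sbasis M X B" "x \<in> X"
  shows "mrank M (insert x B) = mrank M B"
proof -
  have "mrank M (insert x B) \<le> mrank M X" using assms by (intro mrank_mono) (auto simp: sbasis_def)
  moreover have "mrank M B = mrank M X" using assms indep_mrank[OF assms(1)] by (auto simp: sbasis_def)
  moreover have "mrank M B \<le> mrank M (insert x B)" using assms by (intro mrank_mono) auto
  ultimately show ?thesis by linarith
qed

lemma Sym_replace: "m \<in> Sym E d \<Longrightarrow> x \<in># m \<Longrightarrow> b \<in> E \<Longrightarrow> m - {#x#} + {#b#} \<in> Sym E d"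
proof -
  assume m: "m \<in> Sym E d" and x: "x \<in># m" and b: "b \<in> E"
  have "set_mset (m - {#x#}) \<subseteq> set_mset m" by (rule set_mset_mono) simp
  then have s: "set_mset (m - {#x#} + {#b#}) \<subseteq> E" using m b by (auto simp: Sym_def)
  have "size (m - {#x#}) = size m - 1" using x by (simp add: size_Diff_singleton)
  moreover have "size m \<ge> 1" using x by (cases m) auto
  ultimately have "size (m - {#x#} + {#b#}) = size m" by simp
  then show ?thesis using s m by (simp add: Sym_def)
qed

lemma Cl_Sym: assumes R: "\<And>x. R x \<subseteq> E" shows "Cl (Sym E d) good R"
  unfolding Cl_def
proof (intro ballI impI)
  fix m assume m: "m \<in> Sym E d" and "\<exists>x\<in>#m. x \<notin> good"
  then obtain x where x: "x \<in># m" "x \<notin> good" by blast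
  have "\<forall>b\<in>R x. m - {#x#} + {#b#} \<in> Sym E d" using Sym_replace[OF m x(1)] R by blast
  then show "\<exists>x\<in>#m. x \<notin> good \<and> (\<forall>b\<in>R x. m - {#x#} + {#b#} \<in> Sym E d)" using x by blast
qed

lemma sym_power_indep:
  assumes P: "sym_power M d Ms" and d: "1 \<le> d" and M: "matroid M" and B: "sbasis M (ground M) B"
  shows "indep (Ms d) (Sym B d)"
proof -
  have Q: "sym_quasi_power M d Ms" using P by (simp add: sym_power_def)
  have Md: "matroid (Ms d)" by (rule sqp_matroid[OF Q]) (use d in auto)
  have BE: "B \<subseteq> ground M" using B by (simp add: sbasis_def)
  have "mrank (Ms d) (Sym (ground M) d) = mrank (Ms d) (Sym (ground M) d \<inter> Sym B d)"
    by (rule replace[OF Q d M _ BE, where R="\<lambda>_. B"])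
       (use B sbasis_span[OF M B] Cl_Sym[of "\<lambda>_. B", OF BE] in \<open>auto simp: Sym_def\<close>)
  also have "Sym (ground M) d \<inter> Sym B d = Sym B d" using Sym_mono[OF BE] by auto
  finally have "mrank (Ms d) (Sym B d) = rk (Ms d)"
    using sqp_ground[OF Q, of d] d by (simp add: rk_def)
  also have "\<dots> = card (Sym B d)"
    using P B card_Sym[of B d] indep_fin[OF M] by (simp add: sym_power_def sbasis_def rk_def)
  finally show ?thesis
    by (intro mrank_indep[OF Md] finite_Sym) (use B indep_fin[OF M] in \<open>auto simp: sbasis_def\<close>)
qed

lemma loop_restrict: "F \<subseteq> ground M \<Longrightarrow> e \<in> F \<Longrightarrow> loop (restrict M F) e \<longleftrightarrow> loop M e"
  by (auto simp: loop_def)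

theorem deletion:
  assumes P: "sym_power M d Ms" and d: "1 \<le> d" and M: "matroid M" and F: "F \<subseteq> ground M"
  shows "sym_power (restrict M F) d (\<lambda>i. restrict (Ms i) (Sym F i))"
proof -
  let ?E = "ground M"
  let ?N = "\<lambda>i. restrict (Ms i) (Sym F i)"
  have Q: "sym_quasi_power M d Ms" using P by (simp add: sym_power_def)
  have Md: "matroid (Ms d)" by (rule sqp_matroid[OF Q]) (use d in auto)
  have gd: "ground (Ms d) = Sym ?E d" using sqp_ground[OF Q, of d] d by auto
  have c1: "\<forall>i\<in>{1..d}. matroid (?N i) \<and> ground (?N i) = Sym (ground (restrict M F)) i"
  proof
    fix i assume i: "i \<in> {1..d}"
    have "Sym F i \<subseteq> ground (Ms i)" using sqp_ground[OF Q i] Sym_mono[OF F] by simp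
    then show "matroid (?N i) \<and> ground (?N i) = Sym (ground (restrict M F)) i"
      using restrict_matroid[OF sqp_matroid[OF Q i]] by simp
  qed
  have c2: "iso_via (\<lambda>e. {#e#}) (restrict M F) (?N 1)"
    using iso_restrict[OF sqp_one[OF Q] F] by (simp add: Sym_1 Sym_Suc0)
  have c3: "(if (\<forall>e\<in>#\<alpha>. \<not> loop (restrict M F) e)
         then iso_via (\<lambda>\<beta>. \<alpha> + \<beta>) (?N i) (restr_at (?N d) (ground (restrict M F)) i \<alpha>)
         else rk (restr_at (?N d) (ground (restrict M F)) i \<alpha>) = 0)"
    if i: "i \<in> {1..d}" and \<alpha>: "\<alpha> \<in> Sym (ground (restrict M F)) (d - i)" for i \<alpha>
  proof -
    have \<alpha>F: "set_mset \<alpha> \<subseteq> F" using \<alpha> by (simp add: Sym_def)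
    have \<alpha>E: "\<alpha> \<in> Sym ?E (d - i)" using \<alpha> Sym_mono[OF F] by auto
    have lp: "(\<forall>e\<in>#\<alpha>. \<not> loop (restrict M F) e) \<longleftrightarrow> (\<forall>e\<in>#\<alpha>. \<not> loop M e)"
      using \<alpha>F loop_restrict[OF F] by blast
    have sub: "(\<lambda>\<beta>. \<alpha> + \<beta>) ` Sym F i \<subseteq> Sym F d" using \<alpha> i by (auto simp: Sym_def)
    have eqr: "restr_at (?N d) (ground (restrict M F)) i \<alpha> = restrict (Ms d) ((\<lambda>\<beta>. \<alpha> + \<beta>) ` Sym F i)"
      unfolding restr_at_def using restrict_restrict[OF sub] by simp
    show ?thesis
    proof (cases "\<forall>e\<in>#\<alpha>. \<not> loop M e")
      case True
      have iso: "iso_via (\<lambda>\<beta>. \<alpha> + \<beta>) (Ms i) (restr_at (Ms d) ?E i \<alpha>)" by (rule sqp_free[OF Q i \<alpha>E True])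
      have gi: "Sym F i \<subseteq> ground (Ms i)" using sqp_ground[OF Q i] Sym_mono[OF F] by auto
      have sub2: "(\<lambda>\<beta>. \<alpha> + \<beta>) ` Sym F i \<subseteq> (\<lambda>\<beta>. \<alpha> + \<beta>) ` Sym ?E i" using Sym_mono[OF F] by auto
      have "iso_via (\<lambda>\<beta>. \<alpha> + \<beta>) (?N i) (restrict (restr_at (Ms d) ?E i \<alpha>) ((\<lambda>\<beta>. \<alpha> + \<beta>) ` Sym F i))"
        by (rule iso_restrict[OF iso gi])
      then show ?thesis using True lp eqr restrict_restrict[OF sub2] by (simp add: restr_at_def)
    next
      case False
      have z: "rk (restr_at (Ms d) ?E i \<alpha>) = 0" by (rule sqp_loop[OF Q i \<alpha>E False])
      have "mrank (Ms d) ((\<lambda>\<beta>. \<alpha> + \<beta>) ` Sym F i) \<le> mrank (Ms d) ((\<lambda>\<beta>. \<alpha> + \<beta>) ` Sym ?E i)"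
        by (rule mrank_mono[OF Md]) (use Sym_mono[OF F] in auto)
      moreover have "mrank (Ms d) ((\<lambda>\<beta>. \<alpha> + \<beta>) ` Sym ?E i) = 0" using z by (simp add: rk_restr_at)
      moreover have "rk (restr_at (?N d) (ground (restrict M F)) i \<alpha>) = mrank (Ms d) ((\<lambda>\<beta>. \<alpha> + \<beta>) ` Sym F i)"
        unfolding eqr by (simp add: rk_def mrank_restrict)
      ultimately have "rk (restr_at (?N d) (ground (restrict M F)) i \<alpha>) = 0" by linarith
      moreover have "\<not> (\<forall>e\<in>#\<alpha>. \<not> loop (restrict M F) e)" using False lp by blast
      ultimately show ?thesis by (simp only: if_False)
    qed
  qed
  have c4: "rk (?N d) = (rk (restrict M F) + d - 1) choose d"
  proof -
    obtain BF where BF: "sbasis M F BF" using sbasis_ex[OF M] by blast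
    obtain B where B: "sbasis M ?E B" "BF \<subseteq> B" using sbasis_extend[OF M BF F] by blast
    have BFF: "BF \<subseteq> F" using BF by (simp add: sbasis_def)
    have BFE: "BF \<subseteq> ?E" using BFF F by auto
    have "mrank (Ms d) (Sym F d) = mrank (Ms d) (Sym F d \<inter> Sym BF d)"
      by (rule replace[OF Q d M _ BFE, where R="\<lambda>_. BF"])
         (use Sym_mono[OF F] sbasis_span[OF M BF] Cl_Sym[of "\<lambda>_. BF", OF BFF] BF in \<open>auto simp: Sym_def\<close>)
    also have "Sym F d \<inter> Sym BF d = Sym BF d" using Sym_mono[OF BFF] by auto
    finally have r1: "mrank (Ms d) (Sym F d) = mrank (Ms d) (Sym BF d)" .
    have "indep (Ms d) (Sym BF d)"
      using indep_down[OF Md sym_power_indep[OF P d M B(1)]] Sym_mono[OF B(2)] by auto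
    then have "mrank (Ms d) (Sym BF d) = card (Sym BF d)" by (rule indep_mrank[OF Md])
    also have "\<dots> = (card BF + d - 1) choose d"
    proof -
      have "finite BF" using BF indep_fin[OF M] by (simp add: sbasis_def)
      then show ?thesis by (rule card_Sym)
    qed
    finally show ?thesis using r1 BF gd Sym_mono[OF F]
      by (simp add: rk_def mrank_restrict sbasis_def Int_absorb2)
  qed
  show ?thesis unfolding sym_power_def sym_quasi_power_def using c1 c2 c3 c4 by blast
qed




lemma mrank_zero:
  assumes N: "matroid N" and h: "\<forall>x\<in>X. \<not> indep N {x}"
  shows "mrank N X = 0"
proof -
  obtain Y where Y: "Y \<subseteq> X" "indep N Y" "card Y = mrank N X" using mrank_ex[OF N] by blast
  have "Y = {}"
  proof (rule ccontr)
    assume "Y \<noteq> {}"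
    then obtain y where y: "y \<in> Y" by blast
    then have "indep N {y}" using indep_down[OF N Y(2)] by simp
    then show False using h Y(1) y by blast
  qed
  then show ?thesis using Y by simp
qed

lemma sbasis_inter:
  assumes N: "matroid N" and BT: "sbasis N T BT" and B: "indep N B" and sub: "BT \<subseteq> B"
  shows "B \<inter> T = BT"
proof -
  have "indep N (B \<inter> T)" using indep_down[OF N B] by simp
  then have "card (B \<inter> T) \<le> card BT" using mrank_ge[OF N, of "B \<inter> T" T] BT by (simp add: sbasis_def)
  moreover have "BT \<subseteq> B \<inter> T" using BT sub by (auto simp: sbasis_def)
  moreover have "finite (B \<inter> T)" using indep_fin[OF N B] by simp
  ultimately show ?thesis using card_seteq[of "B \<inter> T" BT] by simp
qed

lemma contract_rank:
  assumes N: "matroid N" and T: "T \<subseteq> ground N"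
  shows "mrank (contract N T) (ground N - T) = mrank N (ground N) - mrank N T"
proof -
  let ?r = "mrank N" and ?G = "ground N"
  have NC: "matroid (contract N T)" by (rule contract_matroid[OF N])
  obtain X where X: "X \<subseteq> ?G - T" "indep (contract N T) X" "card X = mrank (contract N T) (?G - T)"
    using mrank_ex[OF NC] by blast
  have "?r (X \<union> T) \<le> ?r ?G" using X T by (intro mrank_mono[OF N]) auto
  then have up: "mrank (contract N T) (?G - T) + ?r T \<le> ?r ?G" using X by simp
  obtain BT where BT: "sbasis N T BT" using sbasis_ex[OF N] by blast
  obtain B where B: "sbasis N ?G B" "BT \<subseteq> B" using sbasis_extend[OF N BT T] by blast
  have Bi: "indep N B" "B \<subseteq> ?G" "card B = ?r ?G" using B by (auto simp: sbasis_def)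
  have BTi: "card BT = ?r T" using BT by (simp add: sbasis_def)
  have inter: "B \<inter> T = BT" by (rule sbasis_inter[OF N BT Bi(1) B(2)])
  have fB: "finite B" using indep_fin[OF N Bi(1)] .
  have "card ((B - T) \<union> (B \<inter> T)) = card (B - T) + card (B \<inter> T)"
    by (rule card_Un_disjoint) (use fB in auto)
  moreover have "(B - T) \<union> (B \<inter> T) = B" by auto
  ultimately have cB: "card B = card (B - T) + card BT" using inter by simp
  have "?r B \<le> ?r ((B - T) \<union> T)" by (rule mrank_mono[OF N]) auto
  then have lo: "card (B - T) + ?r T \<le> ?r ((B - T) \<union> T)" using indep_mrank[OF N Bi(1)] cB BTi by simp
  have "?r ((B - T) \<union> T) \<le> ?r (B - T) + ?r T" by (rule subadd[OF N])
  moreover have "?r (B - T) \<le> card (B - T)" using mrank_le_card[OF N] fB by simp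
  ultimately have "?r ((B - T) \<union> T) = card (B - T) + ?r T" using lo by linarith
  then have "indep (contract N T) (B - T)" using Bi by auto
  then have "card (B - T) \<le> mrank (contract N T) (?G - T)"
    using mrank_ge[OF NC, of "B - T" "?G - T"] Bi by auto
  then show ?thesis using up cB BTi Bi by linarith
qed

lemma iso_mrank_restrict:
  assumes iso: "iso_via f P (restrict Q S)" and Z: "Z \<subseteq> ground P"
  shows "mrank Q (f ` Z) = mrank P Z"
proof -
  have "f ` Z \<subseteq> S" using iso_bij[OF iso] Z by (auto simp: bij_betw_def)
  then have "mrank Q (f ` Z) = mrank (restrict Q S) (f ` Z)" by (simp add: mrank_restrict Int_absorb2)
  also have "\<dots> = mrank P Z" by (rule iso_mrank[OF iso Z])
  finally show ?thesis .
qed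

lemma bij_add: "bij_betw ((+) (a::'a multiset)) G ((+) a ` G)"
  by (simp add: bij_betw_def inj_on_def)

lemma iso_compose:
  fixes a b :: "'a multiset"
  assumes i1: "iso_via ((+) a) P (restrict Q ((+) a ` ground P))"
      and i2: "iso_via ((+) b) Q (restrict R ((+) b ` ground Q))"
      and s: "(+) a ` ground P \<subseteq> ground Q"
  shows "iso_via ((+) (b + a)) P (restrict R ((+) (b + a) ` ground P))"
  unfolding iso_via_def
proof (intro conjI allI impI)
  show "bij_betw ((+) (b + a)) (ground P) (ground (restrict R ((+) (b + a) ` ground P)))"
    unfolding ground_restrict by (rule bij_add)
  fix X :: "'a multiset set" assume X: "X \<subseteq> ground P"
  have e1: "indep P X \<longleftrightarrow> indep Q ((+) a ` X)" using iso_indep[OF i1 X] X by auto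
  have aX: "(+) a ` X \<subseteq> ground Q" using X s by auto
  have e2: "indep Q ((+) a ` X) \<longleftrightarrow> indep R ((+) b ` (+) a ` X)" using iso_indep[OF i2 aX] aX by auto
  have im: "(+) b ` (+) a ` X = (+) (b + a) ` X" by (auto simp: image_image add.assoc)
  show "indep P X \<longleftrightarrow> indep (restrict R ((+) (b + a) ` ground P)) ((+) (b + a) ` X)"
    using e1 e2 im X by auto
qed

lemma iso_decompose:
  fixes a b :: "'a multiset"
  assumes i1: "iso_via ((+) (b + a)) P (restrict R ((+) (b + a) ` ground P))"
      and i2: "iso_via ((+) b) Q (restrict R ((+) b ` ground Q))"
      and s: "(+) a ` ground P \<subseteq> ground Q"
  shows "iso_via ((+) a) P (restrict Q ((+) a ` ground P))"
  unfolding iso_via_def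
proof (intro conjI allI impI)
  show "bij_betw ((+) a) (ground P) (ground (restrict Q ((+) a ` ground P)))"
    unfolding ground_restrict by (rule bij_add)
  fix X :: "'a multiset set" assume X: "X \<subseteq> ground P"
  have e1: "indep P X \<longleftrightarrow> indep R ((+) (b + a) ` X)" using iso_indep[OF i1 X] X by auto
  have aX: "(+) a ` X \<subseteq> ground Q" using X s by auto
  have e2: "indep Q ((+) a ` X) \<longleftrightarrow> indep R ((+) b ` (+) a ` X)" using iso_indep[OF i2 aX] aX by auto
  have im: "(+) b ` (+) a ` X = (+) (b + a) ` X" by (auto simp: image_image add.assoc)
  show "indep P X \<longleftrightarrow> indep (restrict Q ((+) a ` ground P)) ((+) a ` X)"
    using e1 e2 im X by auto
qed

lemma iso_ident:
  assumes N: "matroid N"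
  shows "iso_via ((+) {#}) N (restrict N ((+) {#} ` ground N))"
proof -
  have im: "(+) {#} ` X = X" for X :: "'a multiset set" by (auto simp: image_iff)
  have "restrict N (ground N) = N" by (rule restrict_self[OF N])
  then show ?thesis unfolding iso_via_def im
    by (simp add: bij_betw_def inj_on_def)
qed




definition Tset :: "'a set \<Rightarrow> 'a set \<Rightarrow> nat \<Rightarrow> 'a multiset set" where
  "Tset E C k = {m \<in> Sym E k. \<exists>c\<in>#m. c \<in> C}"

definition QP :: "'a matroid \<Rightarrow> nat \<Rightarrow> (nat \<Rightarrow> 'a multiset matroid) \<Rightarrow> bool" where
  "QP M d Ms \<longleftrightarrow> sym_quasi_power M d Ms \<and> (\<forall>B. sbasis M (ground M) B \<longrightarrow> indep (Ms d) (Sym B d))"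

lemma Sym_minus_T: "Sym E k - Tset E C k = Sym (E - C) k"
  by (auto simp: Tset_def Sym_def)

lemma Tset_sub: "Tset E C k \<subseteq> Sym E k" by (auto simp: Tset_def)

lemma Cl_T:
  assumes BC: "BC \<subseteq> C" "BC \<subseteq> B" "BC \<subseteq> E" and B: "B \<subseteq> E"
  shows "Cl (Tset E C k) B (\<lambda>x. if x \<in> C then BC else B)"
  unfolding Cl_def
proof (intro ballI impI)
  fix m assume m: "m \<in> Tset E C k" and ex: "\<exists>x\<in>#m. x \<notin> B"
  have mS: "m \<in> Sym E k" and c: "\<exists>c\<in>#m. c \<in> C" using m by (auto simp: Tset_def)
  show "\<exists>x\<in>#m. x \<notin> B \<and> (\<forall>b\<in>(if x \<in> C then BC else B). m - {#x#} + {#b#} \<in> Tset E C k)"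
  proof (cases "\<exists>x\<in>#m. x \<in> C \<and> x \<notin> B")
    case True
    then obtain x where x: "x \<in># m" "x \<in> C" "x \<notin> B" by blast
    have "\<forall>b\<in>BC. m - {#x#} + {#b#} \<in> Tset E C k"
    proof
      fix b assume b: "b \<in> BC"
      have "m - {#x#} + {#b#} \<in> Sym E k" using Sym_replace[OF mS x(1)] b BC by auto
      moreover have "b \<in># m - {#x#} + {#b#}" by simp
      ultimately show "m - {#x#} + {#b#} \<in> Tset E C k" using b BC unfolding Tset_def by blast
    qed
    then show ?thesis using x by auto
  next
    case False
    obtain c where c: "c \<in># m" "c \<in> C" using c by blast
    have cB: "c \<in> B" using False c by blast
    obtain x where x: "x \<in># m" "x \<notin> B" using ex by blast
    have xC: "x \<notin> C" using False x by blast
    have "\<forall>b\<in>B. m - {#x#} + {#b#} \<in> Tset E C k"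
    proof
      fix b assume b: "b \<in> B"
      have "m - {#x#} + {#b#} \<in> Sym E k" using Sym_replace[OF mS x(1)] b B by auto
      moreover have "c \<noteq> x" using cB x by auto
      then have "c \<in># m - {#x#} + {#b#}" using c(1) by (auto simp: in_diff_count)
      ultimately show "m - {#x#} + {#b#} \<in> Tset E C k" using c unfolding Tset_def by blast
    qed
    then show ?thesis using x xC by auto
  qed
qed

lemma Cl_shift:
  assumes cl: "Cl S good R" and e: "e \<in> good"
  shows "Cl ((+) {#e#} ` S) good R"
  unfolding Cl_def
proof (intro ballI impI)
  fix m assume m: "m \<in> (+) {#e#} ` S" and ex: "\<exists>x\<in>#m. x \<notin> good"
  then obtain \<beta> where \<beta>: "\<beta> \<in> S" "m = {#e#} + \<beta>" by blast
  have "\<exists>x\<in>#\<beta>. x \<notin> good" using ex \<beta> e by auto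
  then obtain x where x: "x \<in># \<beta>" "x \<notin> good" "\<forall>b\<in>R x. \<beta> - {#x#} + {#b#} \<in> S"
    using cl \<beta>(1) unfolding Cl_def by blast
  have eq: "m - {#x#} + {#b#} = {#e#} + (\<beta> - {#x#} + {#b#})" for b
    using x(1) \<beta>(2) by (simp add: multiset_diff_union_assoc)
  have "\<forall>b\<in>R x. m - {#x#} + {#b#} \<in> (+) {#e#} ` S" using x(3) eq by blast
  moreover have "x \<in># m" using x(1) \<beta>(2) by simp
  ultimately show "\<exists>x\<in>#m. x \<notin> good \<and> (\<forall>b\<in>R x. m - {#x#} + {#b#} \<in> (+) {#e#} ` S)"
    using x(2) by blast
qed

lemma nonloop_iff: "matroid M \<Longrightarrow> e \<in> ground M \<Longrightarrow> \<not> loop M e \<longleftrightarrow> mrank M {e} = 1"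
  using indep_mrank[of M "{e}"] mrank_indep[of M "{e}"] by (auto simp: loop_def)

lemma truncate:
  assumes M: "matroid M" and Q: "QP M d Ms" and d: "2 \<le> d"
    and x0: "x0 \<in> ground M" "\<not> loop M x0"
  shows "QP M (d - 1) Ms"
proof -
  let ?E = "ground M"
  have S: "sym_quasi_power M d Ms" using Q by (simp add: QP_def)
  have d1: "d - 1 \<in> {1..d}" using d by auto
  have x0S: "{#x0#} \<in> Sym ?E (d - (d - 1))" using d x0 by (simp add: Sym_def)
  have lf0: "\<forall>e\<in>#{#x0#}. \<not> loop M e" using x0 by simp
  have h: "iso_via ((+) {#x0#}) (Ms (d - 1)) (restr_at (Ms d) ?E (d - 1) {#x0#})"
    using sqp_free[OF S d1 x0S lf0] .
  have gd1: "ground (Ms (d - 1)) = Sym ?E (d - 1)" using sqp_ground[OF S d1] .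
  have h': "iso_via ((+) {#x0#}) (Ms (d - 1)) (restrict (Ms d) ((+) {#x0#} ` ground (Ms (d - 1))))"
    using h gd1 by (simp add: restr_at_def)
  have c1: "\<forall>i\<in>{1..d-1}. matroid (Ms i) \<and> ground (Ms i) = Sym ?E i"
    using sqp_matroid[OF S] sqp_ground[OF S] by auto
  have c2: "iso_via (\<lambda>e. {#e#}) M (Ms 1)" by (rule sqp_one[OF S])
  have c3: "(if (\<forall>e\<in>#\<alpha>. \<not> loop M e)
         then iso_via (\<lambda>\<beta>. \<alpha> + \<beta>) (Ms i) (restr_at (Ms (d - 1)) ?E i \<alpha>)
         else rk (restr_at (Ms (d - 1)) ?E i \<alpha>) = 0)"
    if i: "i \<in> {1..d-1}" and \<alpha>: "\<alpha> \<in> Sym ?E (d - 1 - i)" for i \<alpha>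
  proof -
    have iD: "i \<in> {1..d}" using i by auto
    have gi: "ground (Ms i) = Sym ?E i" using sqp_ground[OF S iD] .
    have \<gamma>: "{#x0#} + \<alpha> \<in> Sym ?E (d - i)" using \<alpha> i x0 by (auto simp: Sym_def)
    have sub: "(+) \<alpha> ` ground (Ms i) \<subseteq> ground (Ms (d - 1))" using gi gd1 \<alpha> i by (auto simp: Sym_def)
    show ?thesis
    proof (cases "\<forall>e\<in>#\<alpha>. \<not> loop M e")
      case True
      have lf: "\<forall>e\<in>#{#x0#} + \<alpha>. \<not> loop M e" using True x0 by auto
      have i1: "iso_via ((+) ({#x0#} + \<alpha>)) (Ms i) (restrict (Ms d) ((+) ({#x0#} + \<alpha>) ` ground (Ms i)))"
        using sqp_free[OF S iD \<gamma> lf, unfolded restr_at_def gi[symmetric]] .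
      have "iso_via ((+) \<alpha>) (Ms i) (restrict (Ms (d - 1)) ((+) \<alpha> ` ground (Ms i)))"
        by (rule iso_decompose[OF i1 h' sub])
      then show ?thesis using True gi by (simp add: restr_at_def)
    next
      case False
      have lf: "\<not> (\<forall>e\<in>#{#x0#} + \<alpha>. \<not> loop M e)" using False by auto
      have z: "rk (restr_at (Ms d) ?E i ({#x0#} + \<alpha>)) = 0" by (rule sqp_loop[OF S iD \<gamma> lf])
      have Z: "(+) \<alpha> ` Sym ?E i \<subseteq> ground (Ms (d - 1))" using sub gi by simp
      have "rk (restr_at (Ms (d - 1)) ?E i \<alpha>) = mrank (Ms (d - 1)) ((+) \<alpha> ` Sym ?E i)"
        by (simp add: rk_restr_at)
      also have "\<dots> = mrank (Ms d) ((+) {#x0#} ` (+) \<alpha> ` Sym ?E i)"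
        using iso_mrank_restrict[OF h' Z] by simp
      also have "(+) {#x0#} ` (+) \<alpha> ` Sym ?E i = (+) ({#x0#} + \<alpha>) ` Sym ?E i"
        by (auto simp: image_image add.assoc)
      finally have "rk (restr_at (Ms (d - 1)) ?E i \<alpha>) = 0" using z by (simp add: rk_restr_at)
      then show ?thesis by (simp only: if_not_P[OF False])
    qed
  qed
  have c4: "indep (Ms (d - 1)) (Sym B (d - 1))" if B: "sbasis M ?E B" for B
  proof -
    have "1 \<le> mrank M {x0}" using nonloop_iff[OF M x0(1)] x0 by simp
    also have "\<dots> \<le> mrank M ?E" using x0 by (intro mrank_mono[OF M]) auto
    finally have "card B \<ge> 1" using B by (simp add: sbasis_def)
    then obtain b where b: "b \<in> B" by (metis card.empty not_one_le_zero ex_in_conv)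
    have bE: "b \<in> ?E" using b B by (auto simp: sbasis_def)
    have bl: "\<not> loop M b" using b B indep_down[OF M] by (auto simp: sbasis_def loop_def)
    have bS: "{#b#} \<in> Sym ?E (d - (d - 1))" using d bE by (simp add: Sym_def)
    have lfb: "\<forall>e\<in>#{#b#}. \<not> loop M e" using bl by simp
    have hb: "iso_via ((+) {#b#}) (Ms (d - 1)) (restr_at (Ms d) ?E (d - 1) {#b#})"
      using sqp_free[OF S d1 bS lfb] .
    have SB: "indep (Ms d) (Sym B d)" using Q B by (simp add: QP_def)
    have sub: "(+) {#b#} ` Sym B (d - 1) \<subseteq> Sym B d" using b d by (auto simp: Sym_def)
    have BE: "B \<subseteq> ?E" using B by (simp add: sbasis_def)
    have gsub: "Sym B (d - 1) \<subseteq> ground (Ms (d - 1))" using gd1 Sym_mono[OF BE] by simp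
    have "indep (Ms d) ((+) {#b#} ` Sym B (d - 1))" using indep_down[OF sqp_matroid[OF S] SB sub] d by auto
    moreover have "(+) {#b#} ` Sym B (d - 1) \<subseteq> (+) {#b#} ` Sym ?E (d - 1)"
      using Sym_mono[OF BE] by auto
    ultimately show ?thesis using iso_indep[OF hb gsub] by (simp add: restr_at_def)
  qed
  show ?thesis unfolding QP_def sym_quasi_power_def using c1 c2 c3 c4 by blast
qed




lemma rank_eq_card_basis:
  assumes Q: "sym_quasi_power M d Ms" and d: "1 \<le> d" and M: "matroid M"
    and S: "S \<subseteq> Sym (ground M) d" and BE: "B \<subseteq> ground M"
    and R: "\<forall>x\<in>ground M. R x \<subseteq> B \<and> mrank M (insert x (R x)) = mrank M (R x)"
    and cl: "Cl S B R" and SB: "indep (Ms d) (Sym B d)"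
  shows "mrank (Ms d) S = card (S \<inter> Sym B d)"
proof -
  have Md: "matroid (Ms d)" by (rule sqp_matroid[OF Q]) (use d in auto)
  have "mrank (Ms d) S = mrank (Ms d) (S \<inter> Sym B d)"
  proof (rule replace[OF Q d M S BE _ cl])
    fix x m assume "m \<in> S" "x \<in># m" "x \<notin> B"
    then have "x \<in> ground M" using S by (auto simp: Sym_def)
    then show "R x \<subseteq> B \<and> mrank M (insert x (R x)) = mrank M (R x)" using R by blast
  qed
  also have "\<dots> = card (S \<inter> Sym B d)"
    by (rule indep_mrank[OF Md indep_down[OF Md SB]]) auto
  finally show ?thesis .
qed

lemma nonloop_of_span:
  assumes M: "matroid M" and sp: "mrank M (insert e C) \<noteq> mrank M C"
  shows "\<not> loop M e"
proof
  assume "loop M e"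
  then have "\<not> indep M {e}" by (simp add: loop_def)
  then have "mrank M {e} = 0" using mrank_zero[OF M, of "{e}"] by simp
  then show False using loop_span[OF M] sp by blast
qed

lemma P1:
  assumes M: "matroid M" and Q: "QP M d Ms" and d: "2 \<le> d" and C: "C \<subseteq> ground M"
    and e: "e \<in> ground M" and sp: "mrank M (insert e C) \<noteq> mrank M C"
  shows "iso_via ((+) {#e#}) (contract (Ms (d - 1)) (Tset (ground M) C (d - 1)))
           (restr_at (contract (Ms d) (Tset (ground M) C d)) (ground M - C) (d - 1) {#e#})"
proof -
  let ?E = "ground M"
  let ?r = "mrank (Ms d)"
  let ?T = "Tset ?E C d"
  let ?T1 = "Tset ?E C (d - 1)"
  have S: "sym_quasi_power M d Ms" using Q by (simp add: QP_def)
  have d1: "d - 1 \<in> {1..d}" using d by auto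
  have dd: "d \<in> {1..d}" using d by auto
  have Md: "matroid (Ms d)" by (rule sqp_matroid[OF S dd])
  have gd: "ground (Ms d) = Sym ?E d" by (rule sqp_ground[OF S dd])
  have gd1: "ground (Ms (d - 1)) = Sym ?E (d - 1)" by (rule sqp_ground[OF S d1])
  have eC: "e \<notin> C" using sp by (auto simp: insert_absorb)
  have el: "\<not> loop M e" by (rule nonloop_of_span[OF M sp])
  have eS: "{#e#} \<in> Sym ?E (d - (d - 1))" using d e by (simp add: Sym_def)
  have lf0: "\<forall>x\<in>#{#e#}. \<not> loop M x" using el by simp
  have h: "iso_via ((+) {#e#}) (Ms (d - 1)) (restr_at (Ms d) ?E (d - 1) {#e#})"
    using sqp_free[OF S d1 eS lf0] .
  have h': "iso_via ((+) {#e#}) (Ms (d - 1)) (restrict (Ms d) ((+) {#e#} ` ground (Ms (d - 1))))"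
    using h unfolding restr_at_def gd1 .
  have rt: "?r ((+) {#e#} ` Z) = mrank (Ms (d - 1)) Z" if "Z \<subseteq> Sym ?E (d - 1)" for Z
    using iso_mrank_restrict[OF h'] that gd1 by simp
  obtain BC where BC: "sbasis M C BC" using sbasis_ex[OF M] by blast
  obtain I where I: "sbasis M (insert e C) I" "BC \<subseteq> I"
    using sbasis_extend[OF M BC, of "insert e C"] by blast
  have eI: "e \<in> I"
  proof (rule ccontr)
    assume "e \<notin> I"
    then have "I \<subseteq> C" using I by (auto simp: sbasis_def)
    then have "card I \<le> mrank M C" using mrank_ge[OF M, of I C] I by (simp add: sbasis_def)
    moreover have "mrank M C \<le> mrank M (insert e C)" by (rule mrank_mono[OF M]) auto
    ultimately show False using I sp by (simp add: sbasis_def)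
  qed
  obtain B where B: "sbasis M ?E B" "I \<subseteq> B" using sbasis_extend[OF M I(1)] e C by blast
  have BE: "B \<subseteq> ?E" using B by (simp add: sbasis_def)
  have eB: "e \<in> B" using eI B by auto
  have BCs: "BC \<subseteq> C" "BC \<subseteq> B" "BC \<subseteq> ?E" using BC I B C by (auto simp: sbasis_def)
  have SB: "indep (Ms d) (Sym B d)" using Q B by (simp add: QP_def)
  define R where "R = (\<lambda>x. if x \<in> C then BC else B)"
  have Rok: "\<forall>x\<in>?E. R x \<subseteq> B \<and> mrank M (insert x (R x)) = mrank M (R x)"
  proof
    fix x assume x: "x \<in> ?E"
    show "R x \<subseteq> B \<and> mrank M (insert x (R x)) = mrank M (R x)"
    proof (cases "x \<in> C")
      case True then show ?thesis using sbasis_span[OF M BC True] BCs unfolding R_def by simp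
    next
      case False then show ?thesis using sbasis_span[OF M B(1) x] unfolding R_def by simp
    qed
  qed
  have d1': "1 \<le> d" using d by simp
  define Y where "Y = (+) {#e#} ` Sym ?E (d - 1)"
  define A where "A = (+) {#e#} ` ?T1"
  have YS: "Y \<subseteq> Sym ?E d" using e d unfolding Y_def by (auto simp: Sym_def)
  have TS: "?T \<subseteq> Sym ?E d" by (rule Tset_sub)
  have AS: "A \<subseteq> Sym ?E d" using YS Tset_sub unfolding A_def Y_def by blast
  have A_eq: "A = Y \<inter> ?T"
  proof (intro equalityI subsetI)
    fix m assume "m \<in> A"
    then obtain \<beta> where \<beta>: "\<beta> \<in> ?T1" "m = {#e#} + \<beta>" unfolding A_def by blast
    then have "m \<in> Y" using Tset_sub unfolding Y_def by blast
    moreover have "m \<in> ?T" using \<beta> e d by (auto simp: Tset_def Sym_def)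
    ultimately show "m \<in> Y \<inter> ?T" by blast
  next
    fix m assume m: "m \<in> Y \<inter> ?T"
    then obtain \<beta> where \<beta>: "\<beta> \<in> Sym ?E (d - 1)" "m = {#e#} + \<beta>" unfolding Y_def by blast
    obtain c where c: "c \<in># m" "c \<in> C" using m by (auto simp: Tset_def)
    have "c \<in># \<beta>" using c \<beta>(2) eC by auto
    then have "\<beta> \<in> ?T1" using \<beta>(1) c(2) by (auto simp: Tset_def)
    then show "m \<in> A" using \<beta>(2) unfolding A_def by blast
  qed
  have AY: "A \<subseteq> Y" and AT: "A \<subseteq> ?T" using A_eq by auto
  have clT: "Cl ?T B R" unfolding R_def by (rule Cl_T[OF BCs BE])
  have clY: "Cl Y B R" unfolding Y_def
    by (rule Cl_shift[OF Cl_Sym eB]) (use BCs BE in \<open>auto simp: R_def\<close>)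
  have clA: "Cl A B R" unfolding A_def R_def by (rule Cl_shift[OF Cl_T[OF BCs BE] eB])
  have rT: "?r ?T = card (?T \<inter> Sym B d)" by (rule rank_eq_card_basis[OF S d1' M TS BE Rok clT SB])
  have rY: "?r Y = card (Y \<inter> Sym B d)" by (rule rank_eq_card_basis[OF S d1' M YS BE Rok clY SB])
  have rA: "?r A = card (A \<inter> Sym B d)" by (rule rank_eq_card_basis[OF S d1' M AS BE Rok clA SB])
  have fSB: "finite (Sym B d)" using finite_Sym[OF finite_subset[OF BE fin_ground[OF M]]] .
  have cu: "card ((Y \<inter> Sym B d) \<union> (?T \<inter> Sym B d)) + card ((Y \<inter> Sym B d) \<inter> (?T \<inter> Sym B d))
      = card (Y \<inter> Sym B d) + card (?T \<inter> Sym B d)"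
    using card_Un_Int[of "Y \<inter> Sym B d" "?T \<inter> Sym B d"] fSB by simp
  have ci: "(Y \<inter> Sym B d) \<inter> (?T \<inter> Sym B d) = A \<inter> Sym B d" using A_eq by auto
  have "card ((Y \<inter> Sym B d) \<union> (?T \<inter> Sym B d)) = ?r ((Y \<inter> Sym B d) \<union> (?T \<inter> Sym B d))"
    by (rule indep_mrank[OF Md indep_down[OF Md SB], symmetric]) auto
  also have "\<dots> \<le> ?r (Y \<union> ?T)" by (rule mrank_mono[OF Md]) auto
  finally have iii: "?r Y + ?r ?T \<le> ?r (Y \<union> ?T) + ?r A" using cu[unfolded ci] rT rY rA by linarith
  have key: "?r (Z \<union> A) + ?r ?T = ?r (Z \<union> ?T) + ?r A" if Z: "Z \<subseteq> Y" for Z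
  proof -
    have s1: "?r ((Z \<union> A) \<union> ?T) + ?r ((Z \<union> A) \<inter> ?T) \<le> ?r (Z \<union> A) + ?r ?T" by (rule submod[OF Md])
    have e1: "(Z \<union> A) \<union> ?T = Z \<union> ?T" using AT by auto
    have "?r A \<le> ?r ((Z \<union> A) \<inter> ?T)" using AT by (intro mrank_mono[OF Md]) auto
    then have i: "?r (Z \<union> ?T) + ?r A \<le> ?r (Z \<union> A) + ?r ?T" using s1[unfolded e1] by linarith
    have s2: "?r (Y \<union> (Z \<union> ?T)) + ?r (Y \<inter> (Z \<union> ?T)) \<le> ?r Y + ?r (Z \<union> ?T)" by (rule submod[OF Md])
    have e2: "Y \<union> (Z \<union> ?T) = Y \<union> ?T" using Z by auto
    have "?r (Z \<union> A) \<le> ?r (Y \<inter> (Z \<union> ?T))" using Z AY AT by (intro mrank_mono[OF Md]) auto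
    then have ii: "?r (Y \<union> ?T) + ?r (Z \<union> A) \<le> ?r Y + ?r (Z \<union> ?T)" using s2[unfolded e2] by linarith
    show ?thesis using i ii iii by linarith
  qed
  have g1: "ground (contract (Ms (d - 1)) ?T1) = Sym (?E - C) (d - 1)"
    using gd1 Sym_minus_T by simp
  have g2: "ground (restr_at (contract (Ms d) ?T) (?E - C) (d - 1) {#e#}) = (+) {#e#} ` Sym (?E - C) (d - 1)"
    by (simp add: restr_at_def)
  show ?thesis
    unfolding iso_via_def
  proof (intro conjI allI impI)
    show "bij_betw ((+) {#e#}) (ground (contract (Ms (d - 1)) ?T1))
       (ground (restr_at (contract (Ms d) ?T) (?E - C) (d - 1) {#e#}))"
      unfolding g1 g2 by (rule bij_add)
    fix X assume X: "X \<subseteq> ground (contract (Ms (d - 1)) ?T1)"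
    then have X': "X \<subseteq> Sym (?E - C) (d - 1)" using g1 by simp
    have XE: "X \<subseteq> Sym ?E (d - 1)" using X' Sym_mono[of "?E - C" ?E] by auto
    have XT: "X \<union> ?T1 \<subseteq> Sym ?E (d - 1)" using XE Tset_sub by blast
    have eXY: "(+) {#e#} ` X \<subseteq> Y" using XE unfolding Y_def by auto
    have eXT: "(+) {#e#} ` X \<subseteq> Sym ?E d - ?T"
    proof -
      have "(+) {#e#} ` X \<subseteq> Sym (?E - C) d"
      proof
        fix m assume "m \<in> (+) {#e#} ` X"
        then obtain x where x: "x \<in> X" "m = {#e#} + x" by blast
        then have "set_mset x \<subseteq> ?E - C" "size x = d - 1" using X' by (auto simp: Sym_def)
        then show "m \<in> Sym (?E - C) d" using x e eC d by (auto simp: Sym_def)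
      qed
      then show ?thesis using Sym_minus_T by blast
    qed
    have cX: "card ((+) {#e#} ` X) = card X" by (rule card_image) (simp add: inj_on_def)
    have L: "indep (contract (Ms (d - 1)) ?T1) X \<longleftrightarrow> ?r ((+) {#e#} ` X \<union> A) = card X + ?r A"
    proof -
      have "mrank (Ms (d - 1)) (X \<union> ?T1) = ?r ((+) {#e#} ` X \<union> A)"
        using rt[OF XT] unfolding A_def image_Un by simp
      moreover have "mrank (Ms (d - 1)) ?T1 = ?r A" using rt[OF Tset_sub] unfolding A_def by simp
      moreover have "X \<subseteq> ground (Ms (d - 1)) - ?T1" using X' gd1 by (simp add: Sym_minus_T)
      ultimately show ?thesis by simp
    qed
    have Rr: "indep (restr_at (contract (Ms d) ?T) (?E - C) (d - 1) {#e#}) ((+) {#e#} ` X)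
       \<longleftrightarrow> ?r ((+) {#e#} ` X \<union> ?T) = card X + ?r ?T"
      using X' eXT gd cX by (auto simp: restr_at_def)
    show "indep (contract (Ms (d - 1)) ?T1) X \<longleftrightarrow>
          indep (restr_at (contract (Ms d) ?T) (?E - C) (d - 1) {#e#}) ((+) {#e#} ` X)"
      using L Rr key[OF eXY] by linarith
  qed
qed




lemma contract_loop_iff:
  assumes M: "matroid M" and e: "e \<in> ground M - C"
  shows "loop (contract M C) e \<longleftrightarrow> mrank M (insert e C) = mrank M C"
proof -
  have "mrank M (insert e C) \<le> mrank M C + 1" by (rule mrank_insert_le[OF M])
  moreover have "mrank M C \<le> mrank M (insert e C)" by (rule mrank_mono[OF M]) auto
  ultimately show ?thesis using e by (auto simp: loop_def)
qed

lemma QP_of_power: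
  assumes P: "sym_power M d Ms" and d: "1 \<le> d" and M: "matroid M"
  shows "QP M d Ms"
  using P sym_power_indep[OF P d M] by (simp add: QP_def sym_power_def)

lemma QP_ground:
  "QP M d Ms \<Longrightarrow> k \<in> {1..d} \<Longrightarrow> ground (contract (Ms k) (Tset (ground M) C k)) = Sym (ground M - C) k"
  using sqp_ground[of M d Ms k] by (simp add: QP_def Sym_minus_T)

lemma D1:
  assumes M: "matroid M" and C: "C \<subseteq> ground M"
  shows "1 \<le> d \<Longrightarrow> QP M d Ms \<Longrightarrow> i \<in> {1..d} \<Longrightarrow> \<alpha> \<in> Sym (ground M - C) (d - i) \<Longrightarrow>
    \<forall>e\<in>#\<alpha>. \<not> loop (contract M C) e \<Longrightarrow>
    iso_via ((+) \<alpha>) (contract (Ms i) (Tset (ground M) C i))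
      (restr_at (contract (Ms d) (Tset (ground M) C d)) (ground M - C) i \<alpha>)"
proof (induction d arbitrary: i \<alpha>)
  case 0 then show ?case by simp
next
  case (Suc n)
  let ?E = "ground M"
  let ?N = "\<lambda>k. contract (Ms k) (Tset ?E C k)"
  have S: "sym_quasi_power M (Suc n) Ms" using Suc.prems by (simp add: QP_def)
  show ?case
  proof (cases "i = Suc n")
    case True
    then have a0: "\<alpha> = {#}" using Suc.prems(4) by (simp add: Sym_def)
    have Nm: "matroid (?N (Suc n))" by (rule contract_matroid[OF sqp_matroid[OF S]]) auto
    have g: "ground (?N (Suc n)) = Sym (?E - C) (Suc n)" using QP_ground[OF Suc.prems(2)] by simp
    have "iso_via ((+) {#}) (?N (Suc n)) (restrict (?N (Suc n)) ((+) {#} ` Sym (?E - C) (Suc n)))"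
      using iso_ident[OF Nm] unfolding g .
    then show ?thesis unfolding a0 True restr_at_def .
  next
    case False
    then have i: "i \<in> {1..n}" and n: "1 \<le> n" using Suc.prems(3) by auto
    have "size \<alpha> = Suc n - i" using Suc.prems(4) by (simp add: Sym_def)
    then have "\<alpha> \<noteq> {#}" using i by auto
    then obtain e where e: "e \<in># \<alpha>" by (meson multiset_nonemptyE)
    define \<alpha>' where "\<alpha>' = \<alpha> - {#e#}"
    have a_eq: "\<alpha> = {#e#} + \<alpha>'" using e unfolding \<alpha>'_def by simp
    have eE: "e \<in> ?E - C" using e Suc.prems(4) by (auto simp: Sym_def)
    have \<alpha>': "\<alpha>' \<in> Sym (?E - C) (n - i)" using Suc.prems(4) a_eq i
      by (auto simp: Sym_def)
    have lf': "\<forall>x\<in>#\<alpha>'. \<not> loop (contract M C) x" using Suc.prems(5) a_eq by auto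
    have ne: "\<not> loop (contract M C) e" using Suc.prems(5) e by auto
    have sp: "mrank M (insert e C) \<noteq> mrank M C" using contract_loop_iff[OF M eE] ne by simp
    have el: "\<not> loop M e" by (rule nonloop_of_span[OF M sp])
    have Qn: "QP M n Ms" using truncate[OF M Suc.prems(2) _ _ el] n eE by simp
    have IH: "iso_via ((+) \<alpha>') (?N i) (restr_at (?N n) (?E - C) i \<alpha>')"
      by (rule Suc.IH[OF n Qn i \<alpha>' lf'])
    have p1: "iso_via ((+) {#e#}) (?N n) (restr_at (?N (Suc n)) (?E - C) n {#e#})"
      using P1[OF M Suc.prems(2) _ C _ sp] n eE by simp
    have gi: "ground (?N i) = Sym (?E - C) i" using QP_ground[OF Qn i] .
    have gn: "ground (?N n) = Sym (?E - C) n" using QP_ground[OF Qn, of n] n by simp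
    have i1: "iso_via ((+) \<alpha>') (?N i) (restrict (?N n) ((+) \<alpha>' ` ground (?N i)))"
      using IH unfolding restr_at_def gi[symmetric] .
    have i2: "iso_via ((+) {#e#}) (?N n) (restrict (?N (Suc n)) ((+) {#e#} ` ground (?N n)))"
      using p1 unfolding restr_at_def gn[symmetric] .
    have s: "(+) \<alpha>' ` ground (?N i) \<subseteq> ground (?N n)"
      unfolding gi gn using \<alpha>' i by (auto simp: Sym_def)
    have "iso_via ((+) ({#e#} + \<alpha>')) (?N i) (restrict (?N (Suc n)) ((+) ({#e#} + \<alpha>') ` ground (?N i)))"
      by (rule iso_compose[OF i1 i2 s])
    then show ?thesis unfolding a_eq[symmetric] restr_at_def gi .
  qed
qed

lemma Tset_1: "C \<subseteq> E \<Longrightarrow> Tset E C 1 = (\<lambda>e. {#e#}) ` C"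
  by (auto simp: Tset_def Sym_1 Sym_Suc0)

theorem contraction:
  assumes P: "sym_power M d Ms" and d: "1 \<le> d" and M: "matroid M" and C: "C \<subseteq> ground M"
  shows "sym_power (contract M C) d (\<lambda>i. contract (Ms i) (Tset (ground M) C i))"
proof -
  let ?E = "ground M"
  let ?N = "\<lambda>i. contract (Ms i) (Tset ?E C i)"
  have Q: "QP M d Ms" by (rule QP_of_power[OF P d M])
  have S: "sym_quasi_power M d Ms" using P by (simp add: sym_power_def)
  have dd: "d \<in> {1..d}" using d by auto
  have Md: "matroid (Ms d)" by (rule sqp_matroid[OF S dd])
  have gd: "ground (Ms d) = Sym ?E d" by (rule sqp_ground[OF S dd])
  have c1: "\<forall>i\<in>{1..d}. matroid (?N i) \<and> ground (?N i) = Sym (ground (contract M C)) i"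
    using QP_ground[OF Q] contract_matroid[OF sqp_matroid[OF S]] by simp
  have c2: "iso_via (\<lambda>e. {#e#}) (contract M C) (?N 1)"
    using iso_contract[OF sqp_one[OF S] C] Tset_1[OF C] by simp
  have c3: "(if (\<forall>e\<in>#\<alpha>. \<not> loop (contract M C) e)
         then iso_via (\<lambda>\<beta>. \<alpha> + \<beta>) (?N i) (restr_at (?N d) (ground (contract M C)) i \<alpha>)
         else rk (restr_at (?N d) (ground (contract M C)) i \<alpha>) = 0)"
    if i: "i \<in> {1..d}" and \<alpha>: "\<alpha> \<in> Sym (ground (contract M C)) (d - i)" for i \<alpha>
  proof -
    have \<alpha>C: "\<alpha> \<in> Sym (?E - C) (d - i)" using \<alpha> by simp
    show ?thesis
    proof (cases "\<forall>e\<in>#\<alpha>. \<not> loop (contract M C) e")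
      case True
      have "iso_via ((+) \<alpha>) (?N i) (restr_at (?N d) (?E - C) i \<alpha>)"
      proof (cases "i = d")
        case True
        then have a0: "\<alpha> = {#}" using \<alpha>C by (simp add: Sym_def)
        have Nm: "matroid (?N d)" by (rule contract_matroid[OF Md])
        have g: "ground (?N d) = Sym (?E - C) d" using QP_ground[OF Q dd] .
        have "iso_via ((+) {#}) (?N d) (restrict (?N d) ((+) {#} ` Sym (?E - C) d))"
          using iso_ident[OF Nm] unfolding g .
        then show ?thesis unfolding a0 True restr_at_def .
      next
        case False
        then have "size \<alpha> \<noteq> 0" using \<alpha>C i by (simp add: Sym_def)
        then obtain e where e: "e \<in># \<alpha>" by (metis multiset_nonemptyE size_empty)
        have eE: "e \<in> ?E - C" using e \<alpha>C by (auto simp: Sym_def)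
        have "\<not> loop (contract M C) e" using True e by blast
        then have "mrank M (insert e C) \<noteq> mrank M C" using contract_loop_iff[OF M eE] by simp
        then have el: "\<not> loop M e" by (rule nonloop_of_span[OF M])
        show ?thesis by (rule D1[OF M C d Q i \<alpha>C True])
      qed
      then show ?thesis using True by simp
    next
      case False
      then obtain e where e: "e \<in># \<alpha>" "loop (contract M C) e" by blast
      have eE: "e \<in> ?E - C" using e \<alpha>C by (auto simp: Sym_def)
      have spe: "mrank M (insert e C) = mrank M C" using contract_loop_iff[OF M eE] e by simp
      let ?X = "(+) \<alpha> ` Sym (?E - C) i"
      have "mrank (?N d) ?X = 0"
      proof (rule mrank_zero[OF contract_matroid[OF Md]], intro ballI)
        fix m assume "m \<in> ?X"
        then obtain \<beta> where \<beta>: "\<beta> \<in> Sym (?E - C) i" "m = \<alpha> + \<beta>" by blast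
        have mS: "m \<in> Sym ?E d" using \<beta> \<alpha>C i by (auto simp: Sym_def)
        have em: "e \<in># m" using \<beta> e by simp
        define \<gamma> where "\<gamma> = m - {#e#}"
        have m_eq: "m = \<gamma> + {#e#}" using em unfolding \<gamma>_def by simp
        have \<gamma>S: "\<gamma> \<in> Sym ?E (d - 1)" using mS m_eq by (auto simp: Sym_def)
        have st: "mrank (Ms d) (insert m ((\<lambda>b. \<gamma> + {#b#}) ` C)) = mrank (Ms d) ((\<lambda>b. \<gamma> + {#b#}) ` C)"
          unfolding m_eq by (rule step[OF S d M \<gamma>S _ C spe]) (use eE in auto)
        have sub: "(\<lambda>b. \<gamma> + {#b#}) ` C \<subseteq> Tset ?E C d"
          using \<gamma>S C d by (auto simp: Tset_def Sym_def)
        have "mrank (Ms d) (insert m (Tset ?E C d)) = mrank (Ms d) (Tset ?E C d)"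
          by (rule span_mono[OF Md sub st])
        then show "\<not> indep (?N d) {m}" by simp
      qed
      then have "rk (restr_at (?N d) (ground (contract M C)) i \<alpha>) = 0" by (simp add: rk_restr_at)
      then show ?thesis by (simp only: if_not_P[OF False])
    qed
  qed
  have c4: "rk (?N d) = (rk (contract M C) + d - 1) choose d"
  proof -
    let ?T = "Tset ?E C d"
    obtain BC where BC: "sbasis M C BC" using sbasis_ex[OF M] by blast
    obtain B where B: "sbasis M ?E B" "BC \<subseteq> B" using sbasis_extend[OF M BC C] by blast
    have BE: "B \<subseteq> ?E" using B by (simp add: sbasis_def)
    have BCs: "BC \<subseteq> C" "BC \<subseteq> B" "BC \<subseteq> ?E" using BC B C by (auto simp: sbasis_def)
    have fB: "finite B" using finite_subset[OF BE fin_ground[OF M]] .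
    have SB: "indep (Ms d) (Sym B d)" using Q B by (simp add: QP_def)
    define R where "R = (\<lambda>x. if x \<in> C then BC else B)"
    have Rok: "\<forall>x\<in>?E. R x \<subseteq> B \<and> mrank M (insert x (R x)) = mrank M (R x)"
    proof
      fix x assume x: "x \<in> ?E"
      show "R x \<subseteq> B \<and> mrank M (insert x (R x)) = mrank M (R x)"
      proof (cases "x \<in> C")
        case True then show ?thesis using sbasis_span[OF M BC True] BCs unfolding R_def by simp
      next
        case False then show ?thesis using sbasis_span[OF M B(1) x] unfolding R_def by simp
      qed
    qed
    have clT: "Cl ?T B R" unfolding R_def by (rule Cl_T[OF BCs BE])
    have rT: "mrank (Ms d) ?T = card (?T \<inter> Sym B d)"
      by (rule rank_eq_card_basis[OF S d M Tset_sub BE Rok clT SB])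
    have TB: "?T \<inter> Sym B d = Sym B d - Sym (B - C) d" using BE by (auto simp: Tset_def Sym_def)
    have fS: "finite (Sym B d)" using finite_Sym[OF fB] .
    have cT: "card (?T \<inter> Sym B d) = card (Sym B d) - card (Sym (B - C) d)"
      unfolding TB by (rule card_Diff_subset) (use fS Sym_mono[of "B - C" B] in \<open>auto intro: finite_subset\<close>)
    have rSd: "mrank (Ms d) (Sym ?E d) = card (Sym B d)"
    proof -
      have "mrank (Ms d) (Sym ?E d) = rk (Ms d)" using gd by (simp add: rk_def)
      also have "\<dots> = (rk M + d - 1) choose d" using P by (simp add: sym_power_def)
      also have "\<dots> = card (Sym B d)" using card_Sym[OF fB] B by (simp add: sbasis_def rk_def)
      finally show ?thesis .
    qed
    have Tg: "?T \<subseteq> ground (Ms d)" using Tset_sub gd by simp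
    have "rk (?N d) = mrank (Ms d) (ground (Ms d)) - mrank (Ms d) ?T"
      using contract_rank[OF Md Tg] by (simp add: rk_def)
    also have "\<dots> = card (Sym (B - C) d)"
      using rSd rT cT gd Sym_mono[of "B - C" B] card_mono[OF fS, of "Sym (B - C) d"] by auto
    also have "\<dots> = (card (B - C) + d - 1) choose d" by (rule card_Sym) (use fB in simp)
    also have "card (B - C) = rk (contract M C)"
    proof -
      have inter: "B \<inter> C = BC" by (rule sbasis_inter[OF M BC _ B(2)]) (use B in \<open>simp add: sbasis_def\<close>)
      have "card (B - C) = card B - card (B \<inter> C)" using fB by (simp add: card_Diff_subset_Int)
      also have "\<dots> = mrank M ?E - mrank M C" using inter B BC by (simp add: sbasis_def)
      also have "\<dots> = rk (contract M C)" using contract_rank[OF M C] by (simp add: rk_def)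
      finally show ?thesis .
    qed
    finally show ?thesis .
  qed
  show ?thesis unfolding sym_power_def sym_quasi_power_def using c1 c2 c3 c4 by blast
qed




theorem corollary3p8:
  fixes M N :: "'a matroid" and d :: nat
  assumes "d \<ge> 1" and "matroid M" and "admits_sym_power M d" and "minor N M"
  shows "admits_sym_power N d"
proof -
  obtain Ms where P: "sym_power M d Ms" using assms(3) by (auto simp: admits_sym_power_def)
  obtain C D where CD: "C \<subseteq> ground M" "D \<subseteq> ground M" "C \<inter> D = {}" "N = delete (contract M C) D"
    using assms(4) by (auto simp: minor_def)
  have P1: "sym_power (contract M C) d (\<lambda>i. contract (Ms i) (Tset (ground M) C i))"
    by (rule contraction[OF P assms(1) assms(2) CD(1)])
  have M1: "matroid (contract M C)" by (rule contract_matroid[OF assms(2)])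
  have F: "ground (contract M C) - D \<subseteq> ground (contract M C)" by auto
  have "sym_power (restrict (contract M C) (ground (contract M C) - D)) d
     (\<lambda>i. restrict (contract (Ms i) (Tset (ground M) C i)) (Sym (ground (contract M C) - D) i))"
    by (rule deletion[OF P1 assms(1) M1 F])
  then show ?thesis using CD(4) by (auto simp: admits_sym_power_def delete_def)
qed


end
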